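(* Let $h:(0,\infty)\to(0,2]$ be smooth with $h(t)=1$ for $t\le\frac12$ and $h(t)=\frac1t$ for $t\ge1$, and let $\widehat V(q,p)=\sum_{i=1}^n(p_i+h(|q|)q_i)\partial_{p_i}$ on $T^*\mathbb{R}^n$ (with $\widehat V(0,p)=\sum_i p_i\partial_{p_i}$). Then $\widehat V$ is a Liouville vector field for $\omega_0$, and the vector field on $W\setminus Y$ given by $\pi_*\widehat V$ on each copy $\pi(\mathbb{R}^{2n}\times\{\pm1\})$ extends uniquely to a $b^3$-vector field $V$ on $(W,Y)$ which is a Liouville $b^3$-vector field for $\omega_b$, i.e. $\mathcal{L}_V\omega_b=\omega_b$.
   Context: Fix $n\ge1$. Identify $\mathbb{R}^{2n}=T^*\mathbb{R}^n$ with coordinates $(q,p)$ and $\omega_0=\sum dq_i\wedge dp_i$. Realize $T^*S^{n-1}=\{(\psi,\zeta)\in\mathbb{R}^n\times\mathbb{R}^n:|\psi|=1,\ \psi\cdot\zeta=0\}$ with symplectic form the restriction of $\sum d\psi_i\wedge d\zeta_i$. Let $\widetilde W=\mathbb{R}^2\times T^*S^{n-1}$ with coordinates $(z,P_r,\psi,\zeta)$, $\widetilde Y=\{z=0\}$. Define $f:\widetilde W\setminus\widetilde Y\to\mathbb{R}^{2n}\times\{-1,1\}$ by $f(z,P_r,\psi,\zeta)=\big((2z^{-2}\psi,\ P_r\psi+\tfrac{z^2}{2}\zeta),\operatorname{sgn}z\big)$; it is a diffeomorphism onto $T^*(\mathbb{R}^n\setminus\{0\})\times\{-1,1\}$. Let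 $W:=\big((\mathbb{R}^{2n}\times\{-1,1\})\sqcup\widetilde W\big)/\sim$ where $w\sim f(w)$ for $w\in\widetilde W\setminus\widetilde Y$, with the quotient topology; $\pi$ denotes the projection and $Y:=\pi(\widetilde Y)$. The $b^3$-structure near $Y$ is determined by the defining function $z$ ($b^3$-vector fields locally generated by $z^3\partial_z$ and derivatives in the remaining coordinates). $\omega_b$ is the unique $b^3$-symplectic form on $(W,Y)$ with $\pi^*\omega_b=\omega_0$ on $\mathbb{R}^{2n}\times\{-1,1\}$ and $\pi^*\omega_b=-\frac4{z^3}dz\wedge dP_r+\sum d\psi_i\wedge d\zeta_i$ on $\widetilde W$. *)

theory Defs
  imports "HOL-Analysis.Analysis"
begin

fun iter_dderiv :: "'a::real_normed_vector list \<Rightarrow> ('a \<Rightarrow> 'b::real_normed_vector) \<Rightarrow> 'a \<Rightarrow> 'b" where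
  "iter_dderiv [] f = f"
| "iter_dderiv (v # vs) f = (\<lambda>x. frechet_derivative (iter_dderiv vs f) (at x) v)"

definition smooth_on :: "'a::real_normed_vector set \<Rightarrow> ('a \<Rightarrow> 'b::real_normed_vector) \<Rightarrow> bool" where
  "smooth_on S f \<longleftrightarrow> open S \<and> (\<forall>vs. iter_dderiv vs f differentiable_on S)"

definition smooth_on_set :: "'a::real_normed_vector set \<Rightarrow> ('a \<Rightarrow> 'b::real_normed_vector) \<Rightarrow> bool" where
  "smooth_on_set N f \<longleftrightarrow>
     (\<forall>x\<in>N. \<exists>U g. x \<in> U \<and> smooth_on U g \<and> (\<forall>y\<in>U \<inter> N. g y = f y))"

definition tangent_vectors :: "'a::real_normed_vector set \<Rightarrow> 'a \<Rightarrow> 'a set" where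
  "tangent_vectors N x = {v. \<exists>\<gamma> e. 0 < e \<and> \<gamma> 0 = x \<and> (\<forall>t. \<bar>t\<bar> < e \<longrightarrow> \<gamma> t \<in> N)
                              \<and> (\<gamma> has_vector_derivative v) (at 0)}"

text \<open>A 2-form field is given as a map point => (u => w => value).
  Coordinate formula: (L_X Om)_x(u,w) = (D Om_x [X x])(u,w) + Om_x(DX u, w) + Om_x(u, DX w).\<close>
definition lie_deriv2 ::
  "('a::real_normed_vector \<Rightarrow> 'a) \<Rightarrow> ('a \<Rightarrow> 'a \<Rightarrow> 'a \<Rightarrow> real) \<Rightarrow> 'a \<Rightarrow> 'a \<Rightarrow> 'a \<Rightarrow> real" where
  "lie_deriv2 X Om x u w =
     frechet_derivative (\<lambda>y. Om y u w) (at x) (X x)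
     + Om x (frechet_derivative X (at x) u) w
     + Om x u (frechet_derivative X (at x) w)"

definition liouville_on :: "'a::real_normed_vector set \<Rightarrow> ('a \<Rightarrow> 'a \<Rightarrow> 'a \<Rightarrow> real) \<Rightarrow> ('a \<Rightarrow> 'a) \<Rightarrow> bool" where
  "liouville_on U Om X \<longleftrightarrow> smooth_on U X \<and> (\<forall>x\<in>U. \<forall>u w. lie_deriv2 X Om x u w = Om x u w)"

definition liouville_on_subset :: "'a::real_normed_vector set \<Rightarrow> ('a \<Rightarrow> 'a \<Rightarrow> 'a \<Rightarrow> real) \<Rightarrow> ('a \<Rightarrow> 'a) \<Rightarrow> bool" where
  "liouville_on_subset N Om X \<longleftrightarrow>
     smooth_on_set N X \<and> (\<forall>x\<in>N. X x \<in> tangent_vectors N x) \<and>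
     (\<forall>x\<in>N. \<exists>U g. x \<in> U \<and> smooth_on U g \<and> (\<forall>y\<in>U \<inter> N. g y = X y) \<and>
        (\<forall>u\<in>tangent_vectors N x. \<forall>w\<in>tangent_vectors N x. lie_deriv2 g Om x u w = Om x u w))"

text \<open>T^*R^n = R^n x R^n with coordinates (q,p); omega_0 = sum dq_i /\ dp_i.\<close>
definition omega0 :: "(real^'n) \<times> (real^'n) \<Rightarrow> (real^'n) \<times> (real^'n) \<Rightarrow> (real^'n) \<times> (real^'n) \<Rightarrow> real" where
  "omega0 x u w = fst u \<bullet> snd w - fst w \<bullet> snd u"

definition Vhat :: "(real \<Rightarrow> real) \<Rightarrow> (real^'n) \<times> (real^'n) \<Rightarrow> (real^'n) \<times> (real^'n)" where
  "Vhat h = (\<lambda>(q, p). (0, p + h (norm q) *\<^sub>R q))"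

text \<open>Coordinates (z, P_r, psi, zeta) on Wtilde = R^2 x T^*S^(n-1).\<close>
type_synonym ('n) wt = "real \<times> real \<times> (real^('n::finite)) \<times> (real^'n)"

definition Wtilde :: "('n::finite) wt set" where
  "Wtilde = {(z, P, \<psi>, \<zeta>). norm \<psi> = 1 \<and> \<psi> \<bullet> \<zeta> = 0}"

definition Ytilde :: "('n::finite) wt set" where
  "Ytilde = {w \<in> Wtilde. fst w = 0}"

text \<open>The gluing map f (its first component; the second is sgn z).\<close>
definition fmap :: "('n::finite) wt \<Rightarrow> (real^'n) \<times> (real^'n)" where
  "fmap = (\<lambda>(z, P, \<psi>, \<zeta>). ((2 / z^2) *\<^sub>R \<psi>, P *\<^sub>R \<psi> + (z^2 / 2) *\<^sub>R \<zeta>))"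

text \<open>pi^* omega_b = -4/z^3 dz /\ dP_r + sum dpsi_i /\ dzeta_i  (for z \<noteq> 0).\<close>
definition omega_b :: "('n::finite) wt \<Rightarrow> ('n::finite) wt \<Rightarrow> ('n::finite) wt \<Rightarrow> real" where
  "omega_b = (\<lambda>(z, P, \<psi>, \<zeta>) (a1, b1, u1, w1) (a2, b2, u2, w2).
      - 4 / z^3 * (a1 * b2 - a2 * b1) + (u1 \<bullet> w2 - u2 \<bullet> w1))"

text \<open>b^3-vector field on (Wtilde, Ytilde) for the defining function z: a smooth vector field
  tangent to Wtilde whose dz-component is z^3 times a smooth function.\<close>
definition b3_vector_field :: "(('n::finite) wt \<Rightarrow> ('n::finite) wt) \<Rightarrow> bool" where
  "b3_vector_field V \<longleftrightarrow>
     smooth_on_set Wtilde V \<and> (\<forall>w\<in>Wtilde. V w \<in> tangent_vectors Wtilde w) \<and>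
     (\<exists>a :: ('n::finite) wt \<Rightarrow> real. smooth_on_set Wtilde a \<and> (\<forall>w\<in>Wtilde. fst (V w) = (fst w)^3 * a w))"

text \<open>V on Wtilde \ Ytilde is the pushforward of Vhat: f-related to Vhat.\<close>
definition f_related :: "(real \<Rightarrow> real) \<Rightarrow> (('n::finite) wt \<Rightarrow> ('n::finite) wt) \<Rightarrow> bool" where
  "f_related h V \<longleftrightarrow>
     (\<forall>w\<in>Wtilde - Ytilde. frechet_derivative fmap (at w) (V w) = Vhat h (fmap w))"

end

theory Submission
  imports Defs
begin


lemma fd_local:
  assumes "open S" "x \<in> S" "\<And>y. y \<in> S \<Longrightarrow> f y = g y"
  shows "frechet_derivative f (at x) = frechet_derivative g (at x)"
proof -
  have "\<And>f'. (f has_derivative f') (at x) \<longleftrightarrow> (g has_derivative f') (at x)"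
    using assms has_derivative_transform_within_open[of f _ x UNIV S g]
      has_derivative_transform_within_open[of g _ x UNIV S f] by auto
  then show ?thesis unfolding frechet_derivative_def by simp
qed

lemma iter_local:
  assumes "open S" "\<And>y. y \<in> S \<Longrightarrow> f y = g y"
  shows "y \<in> S \<Longrightarrow> iter_dderiv vs f y = iter_dderiv vs g y"
proof (induction vs arbitrary: y)
  case Nil then show ?case using assms by simp
next
  case (Cons v vs)
  then show ?case using fd_local[OF assms(1) Cons.prems, of "iter_dderiv vs f" "iter_dderiv vs g"] by simp
qed

lemma diff_on_cong:
  assumes "open S" "f differentiable_on S" "\<And>y. y \<in> S \<Longrightarrow> f y = g y"
  shows "g differentiable_on S"
  using assms unfolding differentiable_on_eq_differentiable_at[OF assms(1)]
  by (metis differentiable_def has_derivative_transform_within_open)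

lemma smooth_cong:
  assumes "smooth_on S f" "\<And>y. y \<in> S \<Longrightarrow> f y = g y"
  shows "smooth_on S g"
  using assms iter_local[of S f g] diff_on_cong unfolding smooth_on_def by metis

lemma smooth_diff: "smooth_on S f \<Longrightarrow> x \<in> S \<Longrightarrow> f differentiable at x"
  unfolding smooth_on_def using differentiable_on_eq_differentiable_at
  by (metis iter_dderiv.simps(1))

lemma smooth_diff_on: "smooth_on S f \<Longrightarrow> f differentiable_on S"
  unfolding smooth_on_def by (metis iter_dderiv.simps(1))

lemma iter_snoc: "iter_dderiv vs (\<lambda>x. frechet_derivative f (at x) v) = iter_dderiv (vs @ [v]) f"
  by (induction vs) auto

lemma smooth_D: "smooth_on S f \<Longrightarrow> smooth_on S (\<lambda>x. frechet_derivative f (at x) v)"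
  unfolding smooth_on_def iter_snoc by auto

lemma smooth_open: "smooth_on S f \<Longrightarrow> open S"
  unfolding smooth_on_def by auto

lemma smooth_coind:
  assumes "open S" "P f"
    and step: "\<And>g. P g \<Longrightarrow> g differentiable_on S \<and>
         (\<forall>v. \<exists>g'. P g' \<and> (\<forall>x\<in>S. g' x = frechet_derivative g (at x) v))"
  shows "smooth_on S f"
proof -
  have "\<exists>g. P g \<and> (\<forall>x\<in>S. g x = iter_dderiv vs f x)" for vs
  proof (induction vs)
    case Nil then show ?case using assms(2) by auto
  next
    case (Cons v vs)
    then obtain g where g: "P g" "\<forall>x\<in>S. g x = iter_dderiv vs f x" by blast
    obtain g' where g': "P g'" "\<forall>x\<in>S. g' x = frechet_derivative g (at x) v" using step[OF g(1)] by blast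
    have "\<forall>x\<in>S. g' x = iter_dderiv (v # vs) f x"
      using g' fd_local[OF assms(1), of _ g "iter_dderiv vs f"] g(2) by simp
    then show ?case using g' by blast
  qed
  then show ?thesis unfolding smooth_on_def using assms(1) step diff_on_cong by metis
qed

lemma smooth_local:
  assumes "open S" "\<And>x. x \<in> S \<Longrightarrow> \<exists>U. x \<in> U \<and> smooth_on U f"
  shows "smooth_on S f"
  unfolding smooth_on_def
proof (intro conjI allI assms(1))
  fix vs
  show "iter_dderiv vs f differentiable_on S"
    unfolding differentiable_on_eq_differentiable_at[OF assms(1)]
    using assms(2) unfolding smooth_on_def
    by (metis differentiable_on_eq_differentiable_at)
qed

lemma smooth_subset: "smooth_on S f \<Longrightarrow> open T \<Longrightarrow> T \<subseteq> S \<Longrightarrow> smooth_on T f"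
  unfolding smooth_on_def using differentiable_on_subset by blast



lemma fd_eq: "(f has_derivative f') (at x) \<Longrightarrow> frechet_derivative f (at x) v = f' v"
  using frechet_derivative_at by metis

lemma fd_works: "f differentiable at x \<Longrightarrow> (f has_derivative frechet_derivative f (at x)) (at x)"
  using frechet_derivative_works by blast

lemma coind_helper:
  assumes "open S" "\<And>x. x \<in> S \<Longrightarrow> (g has_derivative G x) (at x)"
    "\<And>v. \<exists>g'. P g' \<and> (\<forall>x\<in>S. g' x = G x v)"
  shows "g differentiable_on S \<and> (\<forall>v. \<exists>g'. P g' \<and> (\<forall>x\<in>S. g' x = frechet_derivative g (at x) v))"
proof
  show "g differentiable_on S" using assms(1,2)
    by (meson differentiable_def differentiable_on_eq_differentiable_at)
  show "\<forall>v. \<exists>g'. P g' \<and> (\<forall>x\<in>S. g' x = frechet_derivative g (at x) v)"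
    using assms(3) fd_eq[OF assms(2)] by metis
qed

lemma smooth_affine:
  assumes "open S" "bounded_linear L"
  shows "smooth_on S (\<lambda>x. L x + c)"
proof (rule smooth_coind[where P="\<lambda>g. \<exists>L c. bounded_linear L \<and> (\<forall>x\<in>S. g x = L x + c)"])
  show "open S" by fact
  show "\<exists>L' c'. bounded_linear L' \<and> (\<forall>x\<in>S. L x + c = L' x + c')" using assms by blast
next
  fix g assume "\<exists>L c. bounded_linear L \<and> (\<forall>x\<in>S. g x = L x + c)"
  then obtain L c where L: "bounded_linear L" "\<forall>x\<in>S. g x = L x + c" by blast
  have d: "x \<in> S \<Longrightarrow> (g has_derivative L) (at x)" for x
    using has_derivative_transform_within_open[of "\<lambda>x. L x + c" L x UNIV S g] L assms(1)
    by (auto intro!: has_derivative_add_const bounded_linear_imp_has_derivative)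
  show "g differentiable_on S \<and> (\<forall>v. \<exists>g'. (\<exists>L c. bounded_linear L \<and> (\<forall>x\<in>S. g' x = L x + c)) \<and>
         (\<forall>x\<in>S. g' x = frechet_derivative g (at x) v))"
    apply (rule coind_helper[OF assms(1) d])
     apply assumption
    subgoal for v
      apply (rule exI[of _ "\<lambda>x. L v"])
      apply (rule conjI)
       apply (rule exI[of _ "\<lambda>x. 0"], rule exI[of _ "L v"])
      using bounded_linear_zero by auto
    done
qed

lemma smooth_const: "open S \<Longrightarrow> smooth_on S (\<lambda>x. c)"
  using smooth_affine[of S "\<lambda>x. 0" c] bounded_linear_zero by simp

lemma smooth_linear: "open S \<Longrightarrow> bounded_linear L \<Longrightarrow> smooth_on S L"
  using smooth_affine[of S L 0] by simp

lemma smooth_add: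
  assumes "smooth_on S f1" "smooth_on S f2"
  shows "smooth_on S (\<lambda>x. f1 x + f2 x)"
proof (rule smooth_coind[where P="\<lambda>g. \<exists>f1 f2. smooth_on S f1 \<and> smooth_on S f2 \<and> (\<forall>x\<in>S. g x = f1 x + f2 x)"])
  show "open S" using assms smooth_open by blast
  show "\<exists>g1 g2. smooth_on S g1 \<and> smooth_on S g2 \<and> (\<forall>x\<in>S. f1 x + f2 x = g1 x + g2 x)" using assms by blast
next
  fix g assume "\<exists>f1 f2. smooth_on S f1 \<and> smooth_on S f2 \<and> (\<forall>x\<in>S. g x = f1 x + f2 x)"
  then obtain f1 f2 where f: "smooth_on S f1" "smooth_on S f2" "\<forall>x\<in>S. g x = f1 x + f2 x" by blast
  have o: "open S" using f smooth_open by blast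
  have d: "x \<in> S \<Longrightarrow> (g has_derivative (\<lambda>v. frechet_derivative f1 (at x) v + frechet_derivative f2 (at x) v)) (at x)" for x
    using has_derivative_transform_within_open[of "\<lambda>x. f1 x + f2 x" _ x UNIV S g] f o
    by (auto intro!: has_derivative_add fd_works smooth_diff)
  show "g differentiable_on S \<and> (\<forall>v. \<exists>g'. (\<exists>f1 f2. smooth_on S f1 \<and> smooth_on S f2 \<and> (\<forall>x\<in>S. g' x = f1 x + f2 x)) \<and>
         (\<forall>x\<in>S. g' x = frechet_derivative g (at x) v))"
    apply (rule coind_helper[OF o d])
     apply assumption
    subgoal for v
      apply (rule exI, rule conjI, rule exI, rule exI, rule conjI, rule smooth_D[OF f(1)], rule conjI, rule smooth_D[OF f(2)])
      by auto
    done
qed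

lemma smooth_pair:
  assumes "smooth_on S f1" "smooth_on S f2"
  shows "smooth_on S (\<lambda>x. (f1 x, f2 x))"
proof (rule smooth_coind[where P="\<lambda>g. \<exists>f1 f2. smooth_on S f1 \<and> smooth_on S f2 \<and> (\<forall>x\<in>S. g x = (f1 x, f2 x))"])
  show "open S" using assms smooth_open by blast
  show "\<exists>g1 g2. smooth_on S g1 \<and> smooth_on S g2 \<and> (\<forall>x\<in>S. (f1 x, f2 x) = (g1 x, g2 x))" using assms by blast
next
  fix g assume "\<exists>f1 f2. smooth_on S f1 \<and> smooth_on S f2 \<and> (\<forall>x\<in>S. g x = (f1 x, f2 x))"
  then obtain f1 f2 where f: "smooth_on S f1" "smooth_on S f2" "\<forall>x\<in>S. g x = (f1 x, f2 x)" by blast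
  have o: "open S" using f smooth_open by blast
  have d: "x \<in> S \<Longrightarrow> (g has_derivative (\<lambda>v. (frechet_derivative f1 (at x) v, frechet_derivative f2 (at x) v))) (at x)" for x
    using has_derivative_transform_within_open[of "\<lambda>x. (f1 x, f2 x)" _ x UNIV S g] f o
    by (auto intro!: has_derivative_Pair fd_works smooth_diff)
  show "g differentiable_on S \<and> (\<forall>v. \<exists>g'. (\<exists>f1 f2. smooth_on S f1 \<and> smooth_on S f2 \<and> (\<forall>x\<in>S. g' x = (f1 x, f2 x))) \<and>
         (\<forall>x\<in>S. g' x = frechet_derivative g (at x) v))"
    apply (rule coind_helper[OF o d])
     apply assumption
    subgoal for v
      apply (rule exI, rule conjI, rule exI, rule exI, rule conjI, rule smooth_D[OF f(1)], rule conjI, rule smooth_D[OF f(2)])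
      by auto
    done
qed



abbreviation "DD v f x \<equiv> frechet_derivative f (at x) v"

lemma sp_deriv:
  fixes prod :: "'b::real_normed_vector \<Rightarrow> 'c::real_normed_vector \<Rightarrow> 'd::real_normed_vector"
    and xs :: "(('a::real_normed_vector \<Rightarrow> 'b) \<times> ('a \<Rightarrow> 'c)) list"
  assumes bb: "bounded_bilinear prod"
  shows "(\<forall>p\<in>set xs. fst p differentiable at x \<and> snd p differentiable at x) \<Longrightarrow>
    ((\<lambda>y. sum_list (map (\<lambda>p. prod (fst p y) (snd p y)) xs)) has_derivative
      (\<lambda>v. sum_list (map (\<lambda>p. prod (fst p x) (DD v (snd p) x) + prod (DD v (fst p) x) (snd p x)) xs))) (at x)"
proof (induction xs)
  case Nil then show ?case by simp
next
  case (Cons p xs)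
  have "((\<lambda>y. prod (fst p y) (snd p y)) has_derivative
      (\<lambda>v. prod (fst p x) (DD v (snd p) x) + prod (DD v (fst p) x) (snd p x))) (at x)"
    using Cons.prems by (auto intro!: bounded_bilinear.FDERIV[OF bb] fd_works)
  then show ?case using Cons by (auto intro!: has_derivative_add)
qed

lemma smooth_bilinear:
  fixes prod :: "'b::real_normed_vector \<Rightarrow> 'c::real_normed_vector \<Rightarrow> 'd::real_normed_vector"
    and f1 :: "'a::real_normed_vector \<Rightarrow> 'b" and f2 :: "'a \<Rightarrow> 'c"
  assumes bb: "bounded_bilinear prod" and f: "smooth_on S f1" "smooth_on S f2"
  shows "smooth_on S (\<lambda>x. prod (f1 x) (f2 x))"
proof (rule smooth_coind[where P="\<lambda>g. \<exists>xs::(('a \<Rightarrow> 'b) \<times> ('a \<Rightarrow> 'c)) list. (\<forall>p\<in>set xs. smooth_on S (fst p) \<and> smooth_on S (snd p)) \<and>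
     (\<forall>x\<in>S. g x = sum_list (map (\<lambda>p. prod (fst p x) (snd p x)) xs))"])
  show o: "open S" using f smooth_open by blast
  show "\<exists>xs. (\<forall>p\<in>set xs. smooth_on S (fst p) \<and> smooth_on S (snd p)) \<and>
     (\<forall>x\<in>S. prod (f1 x) (f2 x) = sum_list (map (\<lambda>p. prod (fst p x) (snd p x)) xs))"
    by (rule exI[of _ "[(f1,f2)]"]) (use f in auto)
next
  fix g assume "\<exists>xs. (\<forall>p\<in>set xs. smooth_on S (fst p) \<and> smooth_on S (snd p)) \<and>
     (\<forall>x\<in>S. g x = sum_list (map (\<lambda>p. prod (fst p x) (snd p x)) xs))"
  then obtain xs :: "(('a \<Rightarrow> 'b) \<times> ('a \<Rightarrow> 'c)) list" where xs: "\<forall>p\<in>set xs. smooth_on S (fst p) \<and> smooth_on S (snd p)"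
     "\<forall>x\<in>S. g x = sum_list (map (\<lambda>p. prod (fst p x) (snd p x)) xs)" by blast
  have o: "open S" using f smooth_open by blast
  have d: "x \<in> S \<Longrightarrow> (g has_derivative (\<lambda>v. sum_list (map (\<lambda>p. prod (fst p x) (DD v (snd p) x) + prod (DD v (fst p) x) (snd p x)) xs))) (at x)" for x
    apply (rule has_derivative_transform_within_open[of "\<lambda>y. sum_list (map (\<lambda>p. prod (fst p y) (snd p y)) xs)" _ x UNIV S g])
    using xs o by (auto intro!: sp_deriv[OF bb] smooth_diff)
  show "g differentiable_on S \<and> (\<forall>v. \<exists>g'. (\<exists>xs. (\<forall>p\<in>set xs. smooth_on S (fst p) \<and> smooth_on S (snd p)) \<and>
     (\<forall>x\<in>S. g' x = sum_list (map (\<lambda>p. prod (fst p x) (snd p x)) xs))) \<and>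
         (\<forall>x\<in>S. g' x = frechet_derivative g (at x) v))"
    apply (rule coind_helper[OF o d])
     apply assumption
    subgoal for v
      apply (rule exI, rule conjI)
       apply (rule exI[of _ "map (\<lambda>p. (fst p, \<lambda>y. DD v (snd p) y)) xs @ map (\<lambda>p. (\<lambda>y. DD v (fst p) y, snd p)) xs"])
       apply (rule conjI)
      using xs(1) apply (auto intro!: smooth_D)[1]
       apply (rule ballI, rule refl)
      by (simp add: sum_list_addf o_def)
    done
qed

lemma linear_real1: "linear (L :: real \<Rightarrow> 'b::real_vector) \<Longrightarrow> L s = s *\<^sub>R L 1"
  by (metis linear_scale mult.right_neutral real_scaleR_def)

lemma smooth_comp_real:
  fixes g :: "real \<Rightarrow> real" and f :: "'a::real_normed_vector \<Rightarrow> real"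
  assumes g: "smooth_on T g" and f: "smooth_on S f" and fT: "\<And>x. x \<in> S \<Longrightarrow> f x \<in> T"
  shows "smooth_on S (\<lambda>x. g (f x))"
proof (rule smooth_coind[where P="\<lambda>k. \<exists>xs::((real\<Rightarrow>real)\<times>('a\<Rightarrow>real)) list. (\<forall>p\<in>set xs. smooth_on T (fst p) \<and> smooth_on S (snd p)) \<and>
     (\<forall>x\<in>S. k x = sum_list (map (\<lambda>p. fst p (f x) * snd p x) xs))"])
  show o: "open S" using f smooth_open by blast
  show "\<exists>xs::((real\<Rightarrow>real)\<times>('a\<Rightarrow>real)) list. (\<forall>p\<in>set xs. smooth_on T (fst p) \<and> smooth_on S (snd p)) \<and>
     (\<forall>x\<in>S. g (f x) = sum_list (map (\<lambda>p. fst p (f x) * snd p x) xs))"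
    by (rule exI[of _ "[(g,\<lambda>x. 1)]"]) (use g o in \<open>auto intro: smooth_const\<close>)
next
  fix k assume "\<exists>xs::((real\<Rightarrow>real)\<times>('a\<Rightarrow>real)) list. (\<forall>p\<in>set xs. smooth_on T (fst p) \<and> smooth_on S (snd p)) \<and>
     (\<forall>x\<in>S. k x = sum_list (map (\<lambda>p. fst p (f x) * snd p x) xs))"
  then obtain xs :: "((real\<Rightarrow>real)\<times>('a\<Rightarrow>real)) list" where xs: "\<forall>p\<in>set xs. smooth_on T (fst p) \<and> smooth_on S (snd p)"
     "\<forall>x\<in>S. k x = sum_list (map (\<lambda>p. fst p (f x) * snd p x) xs)" by blast
  have o: "open S" using f smooth_open by blast
  have sT: "p \<in> set xs \<Longrightarrow> smooth_on T (fst p)" for p using xs(1) by blast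
  have sS: "p \<in> set xs \<Longrightarrow> smooth_on S (snd p)" for p using xs(1) by blast
  have chain: "((\<lambda>y. fst p (f y)) has_derivative (\<lambda>v. DD (DD v f x) (fst p) (f x))) (at x)"
    if a: "x \<in> S" "p \<in> set xs" for x p
  proof -
    have "((fst p \<circ> f) has_derivative (frechet_derivative (fst p) (at (f x)) \<circ> frechet_derivative f (at x))) (at x)"
      by (rule diff_chain_at[OF fd_works[OF smooth_diff[OF f a(1)]] fd_works[OF smooth_diff[OF sT[OF a(2)] fT[OF a(1)]]]])
    then show ?thesis by (simp add: o_def)
  qed
  have lin: "DD s (fst p) (f x) = s * DD 1 (fst p) (f x)" if a: "x \<in> S" "p \<in> set xs" for x p s
    using linear_real1[OF linear_frechet_derivative[OF smooth_diff[OF sT[OF a(2)] fT[OF a(1)]]], of s] by simp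
  have d: "x \<in> S \<Longrightarrow> (k has_derivative (\<lambda>v. sum_list (map (\<lambda>p. fst p (f x) * DD v (snd p) x + DD 1 (fst p) (f x) * (DD v f x * snd p x)) xs))) (at x)" for x
  proof -
    assume x: "x \<in> S"
    have dd: "\<forall>q\<in>set (map (\<lambda>p. (\<lambda>y. fst p (f y), snd p)) xs). fst q differentiable at x \<and> snd q differentiable at x"
    proof
      fix q assume "q \<in> set (map (\<lambda>p. (\<lambda>y. fst p (f y), snd p)) xs)"
      then obtain p where p: "p \<in> set xs" "q = (\<lambda>y. fst p (f y), snd p)" by auto
      show "fst q differentiable at x \<and> snd q differentiable at x"
        unfolding p(2) fst_conv snd_conv
        using differentiableI[OF chain[OF x p(1)]] smooth_diff[OF sS[OF p(1)] x] by blast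
    qed
    have A: "((\<lambda>y. sum_list (map (\<lambda>p. fst p (f y) * snd p y) xs)) has_derivative
      (\<lambda>v. sum_list (map (\<lambda>p. fst p (f x) * DD v (snd p) x + DD v (\<lambda>y. fst p (f y)) x * snd p x) xs))) (at x)"
      using sp_deriv[OF bounded_bilinear_mult dd] by (simp add: o_def)
    have B: "(\<lambda>v. sum_list (map (\<lambda>p. fst p (f x) * DD v (snd p) x + DD v (\<lambda>y. fst p (f y)) x * snd p x) xs))
        = (\<lambda>v. sum_list (map (\<lambda>p. fst p (f x) * DD v (snd p) x + DD 1 (fst p) (f x) * (DD v f x * snd p x)) xs))"
    proof (rule ext, rule arg_cong[where f=sum_list], rule map_cong[OF refl])
      fix v p assume p: "p \<in> set xs"
      show "fst p (f x) * DD v (snd p) x + DD v (\<lambda>y. fst p (f y)) x * snd p x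
          = fst p (f x) * DD v (snd p) x + DD 1 (fst p) (f x) * (DD v f x * snd p x)"
        using fd_eq[OF chain[OF x p], of v] lin[OF x p, of "DD v f x"] by simp
    qed
    show ?thesis
      using has_derivative_transform_within_open[OF A[unfolded B] o x, of k] xs(2) by simp
  qed
  show "k differentiable_on S \<and> (\<forall>v. \<exists>g'. (\<exists>xs::((real\<Rightarrow>real)\<times>('a\<Rightarrow>real)) list. (\<forall>p\<in>set xs. smooth_on T (fst p) \<and> smooth_on S (snd p)) \<and>
     (\<forall>x\<in>S. g' x = sum_list (map (\<lambda>p. fst p (f x) * snd p x) xs))) \<and>
         (\<forall>x\<in>S. g' x = frechet_derivative k (at x) v))"
    apply (rule coind_helper[OF o d])
     apply assumption
    subgoal for v
      apply (rule exI, rule conjI)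
       apply (rule exI[of _ "map (\<lambda>p. (fst p, \<lambda>y. DD v (snd p) y)) xs @ map (\<lambda>p. (\<lambda>t. DD 1 (fst p) t, \<lambda>y. DD v f y * snd p y)) xs"])
       apply (rule conjI)
      using xs(1) apply (auto intro!: smooth_D smooth_bilinear[OF bounded_bilinear_mult smooth_D[OF f]])[1]
       apply (rule ballI, rule refl)
      by (simp add: sum_list_addf o_def)
    done
qed

lemma smooth_powr: "smooth_on {0<..} (\<lambda>t::real. t powr a)"
proof (rule smooth_coind[where P="\<lambda>k. \<exists>c a. \<forall>t\<in>{0<..}. k t = c * t powr a"])
  show "open ({0<..}::real set)" by simp
  show "\<exists>c b. \<forall>t\<in>{0<..}. t powr a = c * t powr b" by (rule exI[of _ 1]) auto
next
  fix k assume "\<exists>c a. \<forall>t\<in>({0<..}::real set). k t = c * t powr a"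
  then obtain c b where k: "\<forall>t\<in>({0<..}::real set). k t = c * t powr b" by blast
  have d: "t \<in> {0<..} \<Longrightarrow> (k has_derivative (\<lambda>v. (c * (b * t powr (b - 1))) * v)) (at t)" for t
  proof -
    assume t: "t \<in> {0<..}"
    have "((\<lambda>t. c * t powr b) has_field_derivative (c * (b * t powr (b - 1)))) (at t)"
      using t by (auto intro!: derivative_eq_intros)
    then have "((\<lambda>t. c * t powr b) has_derivative (\<lambda>v. (c * (b * t powr (b - 1))) * v)) (at t)"
      by (simp add: has_field_derivative_def)
    then show ?thesis by (rule has_derivative_transform_within_open[OF _ _ t]) (use k in auto)
  qed
  show "k differentiable_on {0<..} \<and> (\<forall>v. \<exists>g'. (\<exists>c a. \<forall>t\<in>{0<..}. g' t = c * t powr a) \<and>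
         (\<forall>x\<in>{0<..}. g' x = frechet_derivative k (at x) v))"
    apply (rule coind_helper[OF _ d])
      apply simp
     apply assumption
    subgoal for v
      apply (rule exI[of _ "\<lambda>t. (v * c * b) * t powr (b - 1)"])
      apply (rule conjI)
       apply (rule exI[of _ "v * c * b"], rule exI[of _ "b - 1"], simp)
      by (auto simp: algebra_simps)
    done
qed



lemma open_fst_ne: "open {x::'a::real_normed_vector \<times> 'b::real_normed_vector. fst x \<noteq> 0}"
  by (intro open_Collect_neq continuous_intros)

lemma open_fst_small: "open {x::'a::real_normed_vector \<times> 'b::real_normed_vector. norm (fst x) < r}"
  by (intro open_Collect_less continuous_intros)

definition Fh :: "(real \<Rightarrow> real) \<Rightarrow> (real^'n) \<times> (real^'n) \<Rightarrow> (real^'n) \<times> (real^'n)" where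
  "Fh h x = (0, snd x + h (norm (fst x)) *\<^sub>R fst x)"

lemma Vhat_Fh: "Vhat h = Fh h"
  unfolding Vhat_def Fh_def by (auto simp: fun_eq_iff)

lemma smooth_Fh:
  assumes hs: "smooth_on {0<..} h" and h1: "\<forall>t. 0 < t \<and> t \<le> 1/2 \<longrightarrow> h t = 1"
  shows "smooth_on UNIV (Fh h :: (real^'n) \<times> (real^'n) \<Rightarrow> _)"
proof (rule smooth_local)
  show "open (UNIV :: ((real^'n) \<times> (real^'n)) set)" by simp
  fix x :: "(real^'n) \<times> (real^'n)"
  let ?S1 = "{x::(real^'n) \<times> (real^'n). fst x \<noteq> 0}"
  let ?S2 = "{x::(real^'n) \<times> (real^'n). norm (fst x) < 1/2}"
  have s1: "smooth_on ?S1 (Fh h)"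
  proof -
    have o: "open ?S1" by (rule open_fst_ne)
    have ip: "smooth_on ?S1 (\<lambda>x. inner (fst x) (fst x))"
      by (rule smooth_bilinear[OF bounded_bilinear_inner]; rule smooth_linear[OF o bounded_linear_fst])
    have nq: "smooth_on ?S1 (\<lambda>x. (inner (fst x) (fst x)) powr (1/2))"
      by (rule smooth_comp_real[OF smooth_powr ip]) simp
    have hn: "smooth_on ?S1 (\<lambda>x. h ((inner (fst x) (fst x)) powr (1/2)))"
      by (rule smooth_comp_real[OF hs nq]) simp
    have sc: "smooth_on ?S1 (\<lambda>x. h ((inner (fst x) (fst x)) powr (1/2)) *\<^sub>R fst x)"
      by (rule smooth_bilinear[OF bounded_bilinear_scaleR hn smooth_linear[OF o bounded_linear_fst]])
    have ad: "smooth_on ?S1 (\<lambda>x. snd x + h ((inner (fst x) (fst x)) powr (1/2)) *\<^sub>R fst x)"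
      by (rule smooth_add[OF smooth_linear[OF o bounded_linear_snd] sc])
    have pr: "smooth_on ?S1 (\<lambda>x. (0, snd x + h ((inner (fst x) (fst x)) powr (1/2)) *\<^sub>R fst x))"
      by (rule smooth_pair[OF smooth_const[OF o] ad])
    show ?thesis
      by (rule smooth_cong[OF pr]) (simp add: Fh_def norm_eq_sqrt_inner powr_half_sqrt)
  qed
  have s2: "smooth_on ?S2 (Fh h)"
  proof -
    have o: "open ?S2" by (rule open_fst_small)
    have pr: "smooth_on ?S2 (\<lambda>x. (0, snd x + fst x))"
      by (rule smooth_pair[OF smooth_const[OF o] smooth_add[OF smooth_linear[OF o bounded_linear_snd] smooth_linear[OF o bounded_linear_fst]]])
    show ?thesis
      apply (rule smooth_cong[OF pr])
      subgoal for y using h1[rule_format, of "norm (fst y)"] by (cases "fst y = 0") (auto simp: Fh_def)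
      done
  qed
  show "\<exists>U. x \<in> U \<and> smooth_on U (Fh h)"
  proof (cases "fst x = 0")
    case True then show ?thesis using s2 by (intro exI[of _ ?S2]) auto
  next
    case False then show ?thesis using s1 by (intro exI[of _ ?S1]) auto
  qed
qed

definition kf :: "(real \<Rightarrow> real) \<Rightarrow> real \<Rightarrow> real" where
  "kf h z = (if z = 0 then 1 else 2 / z^2 * h (2 / z^2))"

lemma kf_small:
  assumes h2: "\<forall>t\<ge>1. h t = 1 / t" and z: "\<bar>z\<bar> < 1"
  shows "kf h z = 1"
proof (cases "z = 0")
  case False
  have "z^2 < 1" using z by (simp add: abs_square_less_1)
  moreover have "0 < z^2" using False by simp
  ultimately have "2 / z^2 \<ge> 1" by (simp add: field_simps)
  then show ?thesis using h2 False by (simp add: kf_def)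
qed (simp add: kf_def)

lemma smooth_kf:
  assumes hs: "smooth_on {0<..} h" and h2: "\<forall>t\<ge>1. h t = 1 / t"
  shows "smooth_on UNIV (kf h)"
proof (rule smooth_local)
  show "open (UNIV :: real set)" by simp
  fix z :: real
  let ?S1 = "{z::real. z \<noteq> 0}"
  let ?S2 = "{z::real. \<bar>z\<bar> < 1}"
  have s1: "smooth_on ?S1 (kf h)"
  proof -
    have o: "open ?S1" by (intro open_Collect_neq continuous_intros)
    have zz: "smooth_on ?S1 (\<lambda>z. z * z)"
      by (rule smooth_bilinear[OF bounded_bilinear_mult]; rule smooth_linear[OF o bounded_linear_ident])
    have iz: "smooth_on ?S1 (\<lambda>z. (z * z) powr -1)"
      by (rule smooth_comp_real[OF smooth_powr zz]) (metis greaterThan_iff mem_Collect_eq not_real_square_gt_zero)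
    have r: "smooth_on ?S1 (\<lambda>z. 2 * (z * z) powr -1)"
      by (rule smooth_bilinear[OF bounded_bilinear_mult smooth_const[OF o] iz])
    have hr: "smooth_on ?S1 (\<lambda>z. h (2 * (z * z) powr -1))"
      by (rule smooth_comp_real[OF hs r]) (simp; metis not_real_square_gt_zero)
    have pr: "smooth_on ?S1 (\<lambda>z. (2 * (z * z) powr -1) * h (2 * (z * z) powr -1))"
      by (rule smooth_bilinear[OF bounded_bilinear_mult r hr])
    show ?thesis
      by (rule smooth_cong[OF pr]) (simp add: kf_def power2_eq_square)
  qed
  have s2: "smooth_on ?S2 (kf h)"
  proof -
    have o: "open ?S2" by (intro open_Collect_less continuous_intros)
    show ?thesis
      by (rule smooth_cong[OF smooth_const[OF o, of 1]]) (use kf_small[OF h2] in auto)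
  qed
  show "\<exists>U. z \<in> U \<and> smooth_on U (kf h)"
  proof (cases "z = 0")
    case True then show ?thesis using s2 by (intro exI[of _ ?S2]) auto
  next
    case False then show ?thesis using s1 by (intro exI[of _ ?S1]) auto
  qed
qed

definition VV :: "(real \<Rightarrow> real) \<Rightarrow> 'n::finite wt \<Rightarrow> 'n wt" where
  "VV h x = (0, fst (snd x) + kf h (fst x), 0, snd (snd (snd x)))"

lemma smooth_VV:
  assumes hs: "smooth_on {0<..} h" and h2: "\<forall>t\<ge>1. h t = 1 / t"
  shows "smooth_on UNIV (VV h :: 'n::finite wt \<Rightarrow> _)"
proof -
  have o: "open (UNIV :: 'n wt set)" by simp
  have l1: "bounded_linear (\<lambda>x::'n wt. fst (snd x))"
    by (intro bounded_linear_compose[OF bounded_linear_fst bounded_linear_snd])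
  have l2: "bounded_linear (\<lambda>x::'n wt. snd (snd (snd x)))"
    by (intro bounded_linear_compose[OF bounded_linear_snd] bounded_linear_snd)
  have k: "smooth_on UNIV (\<lambda>x::'n wt. kf h (fst x))"
    by (rule smooth_comp_real[OF smooth_kf[OF hs h2] smooth_linear[OF o bounded_linear_fst]]) simp
  have "smooth_on UNIV (\<lambda>x::'n wt. (0::real, fst (snd x) + kf h (fst x), 0::real^'n, snd (snd (snd x))))"
    by (rule smooth_pair[OF smooth_const[OF o] smooth_pair[OF smooth_add[OF smooth_linear[OF o l1] k]
           smooth_pair[OF smooth_const[OF o] smooth_linear[OF o l2]]]])
  then show ?thesis unfolding VV_def .
qed



lemma lie_omega0:
  assumes X: "(X has_derivative (\<lambda>a. (0, snd a + L (fst a)))) (at x)"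
    and sym: "\<And>a b. inner a (L b) = inner b (L a)"
  shows "lie_deriv2 X omega0 x u w = omega0 x u w"
proof -
  have c: "(\<lambda>y. omega0 y u w) = (\<lambda>y. omega0 x u w)" by (simp add: omega0_def)
  have "frechet_derivative X (at x) = (\<lambda>a. (0, snd a + L (fst a)))"
    using frechet_derivative_at[OF X] by simp
  then show ?thesis unfolding lie_deriv2_def c
    using sym[of "fst u" "fst w"]
    by (simp add: omega0_def inner_add_right inner_commute algebra_simps)
qed

lemma Fh_deriv:
  fixes x :: "(real^'n) \<times> (real^'n)"
  assumes hs: "smooth_on {0<..} h" and h1: "\<forall>t. 0 < t \<and> t \<le> 1/2 \<longrightarrow> h t = 1"
  shows "\<exists>L. (Fh h has_derivative (\<lambda>a. (0, snd a + L (fst a)))) (at x) \<and> (\<forall>a b. inner a (L b) = inner b (L a))"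
proof (cases "fst x = 0")
  case True
  let ?S2 = "{x::(real^'n) \<times> (real^'n). norm (fst x) < 1/2}"
  have "((\<lambda>y. (0::real^'n, snd y + fst y)) has_derivative (\<lambda>a. (0, snd a + fst a))) (at x)"
    by (auto intro!: derivative_eq_intros)
  then have "(Fh h has_derivative (\<lambda>a. (0, snd a + fst a))) (at x)"
    apply (rule has_derivative_transform_within_open[OF _ open_fst_small[of "1/2"]])
    using True apply simp
    subgoal for y using h1[rule_format, of "norm (fst y)"] by (cases "fst y = 0") (auto simp: Fh_def)
    done
  then show ?thesis by (intro exI[of _ "\<lambda>b. b"]) (simp add: inner_commute)
next
  case False
  define q where "q = fst x"
  have q0: "q \<noteq> 0" using False q_def by simp
  define H where "H = DD 1 h (norm q)"
  have hd: "(h has_derivative (\<lambda>s. s * H)) (at (norm q))"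
  proof -
    have "(h has_derivative frechet_derivative h (at (norm q))) (at (norm q))"
      by (rule fd_works[OF smooth_diff[OF hs]]) (use q0 in simp)
    moreover have "frechet_derivative h (at (norm q)) = (\<lambda>s. s * H)"
    proof
      fix s
      have "norm q \<in> {0<..}" using q0 by simp
      from linear_real1[OF linear_frechet_derivative[OF smooth_diff[OF hs this]], of s]
      show "frechet_derivative h (at (norm q)) s = s * H" unfolding H_def by simp
    qed
    ultimately show ?thesis by simp
  qed
  have nd: "((\<lambda>y. norm (fst y)) has_derivative (\<lambda>a. inner (fst a) (sgn q))) (at x)"
    using diff_chain_at[OF has_derivative_fst[OF has_derivative_ident] has_derivative_norm[OF q0, unfolded q_def]]
    unfolding q_def by (simp add: o_def)
  have hn: "((\<lambda>y. h (norm (fst y))) has_derivative (\<lambda>a. inner (fst a) (sgn q) * H)) (at x)"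
    using diff_chain_at[OF nd hd[unfolded q_def]] unfolding q_def by (simp add: o_def)
  define L where "L b = h (norm q) *\<^sub>R b + (inner b (sgn q) * H) *\<^sub>R q" for b
  have "(Fh h has_derivative (\<lambda>a. (0, snd a + L (fst a)))) (at x)"
    unfolding Fh_def[abs_def] L_def
    apply (rule has_derivative_Pair[OF has_derivative_const has_derivative_add[OF has_derivative_snd[OF has_derivative_ident]
          has_derivative_scaleR[OF hn has_derivative_fst[OF has_derivative_ident]]], THEN has_derivative_eq_rhs])
    by (auto simp: fun_eq_iff q_def)
  moreover have "inner a (L b) = inner b (L a)" for a b
    unfolding L_def by (simp add: inner_add_right sgn_div_norm inner_commute algebra_simps)
  ultimately show ?thesis by blast
qed

lemma Vhat_liouville:
  assumes hs: "smooth_on {0<..} h" and h1: "\<forall>t. 0 < t \<and> t \<le> 1/2 \<longrightarrow> h t = 1"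
  shows "liouville_on UNIV omega0 (Vhat h :: (real^'n) \<times> (real^'n) \<Rightarrow> (real^'n) \<times> (real^'n))"
  unfolding liouville_on_def Vhat_Fh
  using smooth_Fh[OF hs h1] Fh_deriv[OF hs h1] lie_omega0 by blast



lemma omega_b_eq: "omega_b y u w = -4 / (fst y)^3 * (fst u * fst (snd w) - fst w * fst (snd u))
   + (inner (fst (snd (snd u))) (snd (snd (snd w))) - inner (fst (snd (snd w))) (snd (snd (snd u))))"
  unfolding omega_b_def by (simp add: case_prod_beta)

lemma fmap_eq: "fmap x = ((2 / (fst x)^2) *\<^sub>R fst (snd (snd x)),
    fst (snd x) *\<^sub>R fst (snd (snd x)) + ((fst x)^2 / 2) *\<^sub>R snd (snd (snd x)))"
  unfolding fmap_def by (simp add: case_prod_beta)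

lemma inv2_deriv: "z \<noteq> 0 \<Longrightarrow> ((\<lambda>t::real. 2 / t^2) has_real_derivative (-4 / z^3)) (at z)"
  by (rule derivative_eq_intros refl | simp)+ (simp add: field_simps power2_eq_square power3_eq_cube power4_eq_xxxx)

lemma fmap_deriv:
  fixes w :: "'n::finite wt"
  assumes z: "fst w \<noteq> 0"
  shows "(fmap has_derivative (\<lambda>d. ((-4 / (fst w)^3 * fst d) *\<^sub>R fst (snd (snd w)) + (2 / (fst w)^2) *\<^sub>R fst (snd (snd d)),
     fst (snd d) *\<^sub>R fst (snd (snd w)) + fst (snd w) *\<^sub>R fst (snd (snd d)) + (fst w * fst d) *\<^sub>R snd (snd (snd w))
     + ((fst w)^2 / 2) *\<^sub>R snd (snd (snd d))))) (at w)"
proof -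
  have a: "((\<lambda>x::'n wt. 2 / (fst x)^2) has_derivative (\<lambda>d. -4 / (fst w)^3 * fst d)) (at w)"
    using diff_chain_at[OF has_derivative_fst[OF has_derivative_ident] inv2_deriv[OF z, unfolded has_field_derivative_def]]
    by (simp add: o_def mult.commute)
  have b: "((\<lambda>x::'n wt. (fst x)^2 / 2) has_derivative (\<lambda>d. fst w * fst d)) (at w)"
    by (rule derivative_eq_intros refl | simp)+ (auto simp: fun_eq_iff)
  show ?thesis unfolding fmap_eq[abs_def]
    apply (rule has_derivative_Pair[OF has_derivative_scaleR[OF a] has_derivative_add[OF has_derivative_scaleR has_derivative_scaleR[OF b]], THEN has_derivative_eq_rhs])
    by (auto intro!: derivative_eq_intros simp: fun_eq_iff algebra_simps)
qed

lemma VV_deriv: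
  fixes x :: "'n::finite wt"
  assumes hs: "smooth_on {0<..} h" and h2: "\<forall>t\<ge>1. h t = 1 / t"
  shows "\<exists>K. (VV h has_derivative (\<lambda>d. (0, fst (snd d) + K * fst d, 0, snd (snd (snd d))))) (at x)"
proof -
  have "kf h differentiable at (fst x)" using smooth_diff[OF smooth_kf[OF hs h2]] by simp
  then obtain K where K: "(kf h has_real_derivative K) (at (fst x))" using real_differentiable_def by blast
  have k: "((\<lambda>y::'n wt. kf h (fst y)) has_derivative (\<lambda>d. K * fst d)) (at x)"
    using diff_chain_at[OF has_derivative_fst[OF has_derivative_ident] K[unfolded has_field_derivative_def]]
    by (simp add: o_def)
  have "(VV h has_derivative (\<lambda>d. (0, fst (snd d) + K * fst d, 0, snd (snd (snd d))))) (at x)"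
    unfolding VV_def[abs_def]
    by (rule has_derivative_Pair[OF has_derivative_const has_derivative_Pair[OF has_derivative_add[OF _ k] has_derivative_Pair[OF has_derivative_const]]])
       (auto intro!: derivative_eq_intros)
  then show ?thesis by blast
qed

lemma lie_VV:
  fixes x :: "'n::finite wt"
  assumes hs: "smooth_on {0<..} h" and h2: "\<forall>t\<ge>1. h t = 1 / t" and z: "fst x \<noteq> 0"
  shows "lie_deriv2 (VV h) omega_b x u w = omega_b x u w"
proof -
  obtain K where K: "(VV h has_derivative (\<lambda>d. (0, fst (snd d) + K * fst d, 0, snd (snd (snd d))))) (at x)"
    using VV_deriv[OF hs h2] by blast
  define A where "A = fst u * fst (snd w) - fst w * fst (snd u)"
  define B where "B = inner (fst (snd (snd u))) (snd (snd (snd w))) - inner (fst (snd (snd w))) (snd (snd (snd u)))"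
  have "\<exists>D. ((\<lambda>t::real. -4 / t^3 * A + B) has_real_derivative D) (at (fst x))"
    by (intro exI derivative_eq_intros refl) (use z in auto)
  then obtain D where D: "((\<lambda>t::real. -4 / t^3 * A + B) has_real_derivative D) (at (fst x))" by blast
  have om: "(\<lambda>y. omega_b y u w) = (\<lambda>t::real. -4 / t^3 * A + B) \<circ> fst"
    unfolding A_def B_def by (simp add: omega_b_eq o_def)
  have "((\<lambda>y. omega_b y u w) has_derivative (\<lambda>d. D * fst d)) (at x)"
    unfolding om
    using diff_chain_at[OF has_derivative_fst[OF has_derivative_ident] D[unfolded has_field_derivative_def]]
    by (simp add: o_def)
  then have 1: "frechet_derivative (\<lambda>y. omega_b y u w) (at x) (VV h x) = 0"
    by (simp add: fd_eq VV_def)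
  show ?thesis
    unfolding lie_deriv2_def 1 fd_eq[OF K]
    unfolding omega_b_eq by (simp add: algebra_simps)
qed

lemma mem_Wtilde: "w \<in> Wtilde \<longleftrightarrow> norm (fst (snd (snd w))) = 1 \<and> inner (fst (snd (snd w))) (snd (snd (snd w))) = 0"
  unfolding Wtilde_def by (simp add: case_prod_beta)

lemma mem_Ytilde: "w \<in> Ytilde \<longleftrightarrow> w \<in> Wtilde \<and> fst w = 0"
  unfolding Ytilde_def by simp

lemma const_deriv_zero:
  fixes \<phi> :: "real \<Rightarrow> real"
  assumes d: "(\<phi> has_derivative D) (at 0)" and e: "0 < e" and c: "\<And>t. \<bar>t\<bar> < e \<Longrightarrow> \<phi> t = c"
  shows "D 1 = 0"
proof -
  have "(\<phi> has_derivative (\<lambda>_. 0)) (at 0)"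
    apply (rule has_derivative_transform_within_open[OF has_derivative_const[of c] open_ball[of 0 e]])
    using e c by (auto simp: dist_real_def)
  with d have "D = (\<lambda>_. 0)" using has_derivative_unique by blast
  then show ?thesis by simp
qed

lemma tangent_constraints:
  fixes w v :: "'n::finite wt"
  assumes "v \<in> tangent_vectors Wtilde w"
  shows "inner (fst (snd (snd w))) (fst (snd (snd v))) = 0 \<and>
     inner (fst (snd (snd w))) (snd (snd (snd v))) + inner (fst (snd (snd v))) (snd (snd (snd w))) = 0"
proof -
  obtain \<gamma> e where g: "0 < e" "\<gamma> 0 = w" "\<And>t. \<bar>t\<bar> < e \<Longrightarrow> \<gamma> t \<in> Wtilde" "(\<gamma> has_vector_derivative v) (at 0)"
    using assms unfolding tangent_vectors_def by blast
  have G: "(\<gamma> has_derivative (\<lambda>s. s *\<^sub>R v)) (at 0)" using g(4) by (simp add: has_vector_derivative_def)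
  have P: "((\<lambda>t. fst (snd (snd (\<gamma> t)))) has_derivative (\<lambda>s. s *\<^sub>R fst (snd (snd v)))) (at 0)"
    using has_derivative_fst[OF has_derivative_snd[OF has_derivative_snd[OF G]]] by simp
  have Z: "((\<lambda>t. snd (snd (snd (\<gamma> t)))) has_derivative (\<lambda>s. s *\<^sub>R snd (snd (snd v)))) (at 0)"
    using has_derivative_snd[OF has_derivative_snd[OF has_derivative_snd[OF G]]] by simp
  have 1: "inner (fst (snd (snd w))) (fst (snd (snd v))) + inner (fst (snd (snd v))) (fst (snd (snd w))) = 0"
  proof -
    have "(\<lambda>s. inner (fst (snd (snd (\<gamma> 0)))) (s *\<^sub>R fst (snd (snd v))) + inner (s *\<^sub>R fst (snd (snd v))) (fst (snd (snd (\<gamma> 0))))) 1 = 0"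
      apply (rule const_deriv_zero[OF has_derivative_inner[OF P P] g(1), of 1])
      using g(3) by (simp add: mem_Wtilde norm_eq_1)
    then show ?thesis using g(2) by simp
  qed
  have 2: "inner (fst (snd (snd w))) (snd (snd (snd v))) + inner (fst (snd (snd v))) (snd (snd (snd w))) = 0"
  proof -
    have "(\<lambda>s. inner (fst (snd (snd (\<gamma> 0)))) (s *\<^sub>R snd (snd (snd v))) + inner (s *\<^sub>R fst (snd (snd v))) (snd (snd (snd (\<gamma> 0))))) 1 = 0"
      apply (rule const_deriv_zero[OF has_derivative_inner[OF P Z] g(1), of 0])
      using g(3) by (simp add: mem_Wtilde)
    then show ?thesis using g(2) by simp
  qed
  show ?thesis using 1 2 by (simp add: inner_commute)
qed

lemma curve_tangent:
  fixes w :: "'n::finite wt"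
  assumes "\<And>t. (fst w, fst (snd w) + t * c, fst (snd (snd w)), (1 + t) *\<^sub>R snd (snd (snd w))) \<in> N"
  shows "(0, c, 0, snd (snd (snd w))) \<in> tangent_vectors N w"
  unfolding tangent_vectors_def
proof (intro CollectI exI conjI allI impI)
  let ?g = "\<lambda>t. (fst w, fst (snd w) + t * c, fst (snd (snd w)), (1 + t) *\<^sub>R snd (snd (snd w)))"
  show "(0::real) < 1" by simp
  show "?g 0 = w" by simp
  show "?g t \<in> N" for t by (rule assms)
  show "(?g has_vector_derivative (0, c, 0, snd (snd (snd w)))) (at 0)"
    by (auto intro!: derivative_eq_intros)
qed

lemma VV_tangent:
  fixes w :: "'n::finite wt"
  assumes "w \<in> Wtilde"
  shows "VV h w \<in> tangent_vectors Wtilde w" "w \<notin> Ytilde \<Longrightarrow> VV h w \<in> tangent_vectors (Wtilde - Ytilde) w"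
  unfolding VV_def
  using assms by (auto intro!: curve_tangent simp: mem_Wtilde mem_Ytilde)

lemma Vhat_fmap:
  fixes w :: "'n::finite wt"
  assumes w: "w \<in> Wtilde" and z: "fst w \<noteq> 0"
  shows "Vhat h (fmap w) = (0, fst (snd w) *\<^sub>R fst (snd (snd w)) + ((fst w)^2 / 2) *\<^sub>R snd (snd (snd w))
            + kf h (fst w) *\<^sub>R fst (snd (snd w)))"
proof -
  have n: "norm ((2 / (fst w)^2) *\<^sub>R fst (snd (snd w))) = 2 / (fst w)^2"
    using w z by (simp add: mem_Wtilde)
  show ?thesis unfolding Vhat_def fmap_eq using z n by (simp add: kf_def algebra_simps)
qed

lemma fd_fmap:
  fixes w :: "'n::finite wt"
  assumes z: "fst w \<noteq> 0"
  shows "frechet_derivative fmap (at w) d = ((-4 / (fst w)^3 * fst d) *\<^sub>R fst (snd (snd w)) + (2 / (fst w)^2) *\<^sub>R fst (snd (snd d)),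
     fst (snd d) *\<^sub>R fst (snd (snd w)) + fst (snd w) *\<^sub>R fst (snd (snd d)) + (fst w * fst d) *\<^sub>R snd (snd (snd w))
     + ((fst w)^2 / 2) *\<^sub>R snd (snd (snd d)))"
  using fd_eq[OF fmap_deriv[OF z]] by simp

lemma VV_f_related: "f_related h (VV h :: 'n::finite wt \<Rightarrow> _)"
  unfolding f_related_def
proof
  fix w :: "'n wt" assume w: "w \<in> Wtilde - Ytilde"
  then have z: "fst w \<noteq> 0" and wW: "w \<in> Wtilde" by (auto simp: mem_Ytilde)
  show "frechet_derivative fmap (at w) (VV h w) = Vhat h (fmap w)"
    unfolding fd_fmap[OF z] Vhat_fmap[OF wW z] by (simp add: VV_def algebra_simps)
qed

lemma uniq_off:
  fixes w :: "'n::finite wt"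
  assumes w: "w \<in> Wtilde" and z: "fst w \<noteq> 0" and tv: "v \<in> tangent_vectors Wtilde w"
    and eq: "frechet_derivative fmap (at w) v = Vhat h (fmap w)"
  shows "v = VV h w"
proof -
  obtain a b u vv where v: "v = (a, b, u, vv)" by (metis prod.collapse)
  obtain Z P \<psi> \<zeta> where wd: "w = (Z, P, \<psi>, \<zeta>)" by (metis prod.collapse)
  have c: "inner \<psi> u = 0" "inner \<psi> vv + inner u \<zeta> = 0" using tangent_constraints[OF tv] by (auto simp: v wd)
  have ww: "inner \<psi> \<psi> = 1" "inner \<psi> \<zeta> = 0" using w by (auto simp: mem_Wtilde wd norm_eq_1)
  have z0: "Z \<noteq> 0" using z wd by simp
  define k where "k = kf h Z"
  have E: "(-4 / Z^3 * a) *\<^sub>R \<psi> + (2 / Z^2) *\<^sub>R u = 0"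
      "b *\<^sub>R \<psi> + P *\<^sub>R u + (Z * a) *\<^sub>R \<zeta> + (Z^2 / 2) *\<^sub>R vv = P *\<^sub>R \<psi> + (Z^2 / 2) *\<^sub>R \<zeta> + k *\<^sub>R \<psi>"
    using eq unfolding fd_fmap[OF z] Vhat_fmap[OF w z] by (simp_all add: v wd k_def)
  have "inner \<psi> ((-4 / Z^3 * a) *\<^sub>R \<psi> + (2 / Z^2) *\<^sub>R u) = 0" using E(1) by simp
  then have "-4 / Z^3 * a = 0" using c ww by (simp add: inner_add_right inner_diff_right)
  then have a0: "a = 0" using z0 by simp
  then have u0: "u = 0" using E(1) z0 by simp
  have E2: "b *\<^sub>R \<psi> + (Z^2 / 2) *\<^sub>R vv = (P + k) *\<^sub>R \<psi> + (Z^2 / 2) *\<^sub>R \<zeta>"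
    using E(2) a0 u0 by (simp add: algebra_simps)
  have "inner \<psi> (b *\<^sub>R \<psi> + (Z^2 / 2) *\<^sub>R vv) = inner \<psi> ((P + k) *\<^sub>R \<psi> + (Z^2 / 2) *\<^sub>R \<zeta>)" using E2 by simp
  then have b0: "b = P + k" using c ww u0 by (simp add: inner_add_right)
  then have "(Z^2 / 2) *\<^sub>R vv = (Z^2 / 2) *\<^sub>R \<zeta>" using E2 by simp
  then have "vv = \<zeta>" using z0 by simp
  then show ?thesis using a0 u0 b0 by (simp add: v wd VV_def k_def)
qed



lemma smooth_set_UNIV: "smooth_on UNIV f \<Longrightarrow> smooth_on_set N f"
  unfolding smooth_on_set_def by blast

lemma uniq_on:
  fixes w :: "'n::finite wt"
  assumes h2: "\<forall>t\<ge>1. h t = 1 / t"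
    and b3: "b3_vector_field V'" and fr: "f_related h V'" and w: "w \<in> Wtilde"
  shows "V' w = VV h w"
proof (cases "fst w = 0")
  case False
  show ?thesis
    by (rule uniq_off[OF w False]) (use b3 fr w False in \<open>auto simp: b3_vector_field_def f_related_def mem_Ytilde\<close>)
next
  case True
  obtain P \<psi> \<zeta> where wd: "w = (0, P, \<psi>, \<zeta>)" using True by (metis prod.collapse)
  obtain U g where U: "w \<in> U" "smooth_on U g" "\<forall>y\<in>U \<inter> Wtilde. g y = V' y"
    using b3 w unfolding b3_vector_field_def smooth_on_set_def by blast
  have cont: "isCont g w" using differentiable_imp_continuous_within[OF smooth_diff[OF U(2) U(1)]] by simp
  define s where "s m = (inverse (real (Suc (Suc m))), P, \<psi>, \<zeta>)" for m
  have r: "(\<lambda>m. inverse (real (Suc (Suc m)))) \<longlonglongrightarrow> 0"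
    using LIMSEQ_Suc[OF LIMSEQ_inverse_real_of_nat] .
  have sl: "s \<longlonglongrightarrow> w" unfolding s_def wd by (intro tendsto_intros r)
  have ev: "eventually (\<lambda>m. s m \<in> U) sequentially"
    using sl smooth_open[OF U(2)] U(1) by (simp add: tendsto_def)
  have sW: "s m \<in> Wtilde" for m using w by (simp add: s_def wd mem_Wtilde)
  have VVs: "VV h (s m) = VV h w" for m
  proof -
    have "\<bar>inverse (real (Suc (Suc m)))\<bar> < 1" by (simp add: field_simps)
    then show ?thesis using kf_small[OF h2] by (simp add: VV_def s_def wd)
  qed
  have "eventually (\<lambda>m. g (s m) = VV h w) sequentially"
  proof (rule eventually_mono[OF ev])
    fix m assume "s m \<in> U"
    then have "g (s m) = V' (s m)" using U(3) sW by blast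
    also have "\<dots> = VV h (s m)"
      by (rule uniq_off[OF sW]) (use b3 fr sW in \<open>auto simp: b3_vector_field_def f_related_def mem_Ytilde s_def\<close>)
    finally show "g (s m) = VV h w" using VVs by simp
  qed
  then have l1: "(\<lambda>m. g (s m)) \<longlonglongrightarrow> VV h w" by (rule tendsto_eventually)
  have l2: "(\<lambda>m. g (s m)) \<longlonglongrightarrow> g w" using isCont_tendsto_compose[OF cont sl] .
  have "g w = VV h w" using LIMSEQ_unique[OF l2 l1] .
  then show ?thesis using U(1,3) w by auto
qed

theorem lemma5p6:
  fixes h :: "real \<Rightarrow> real"
  assumes "smooth_on {0<..} h"
    and "\<forall>t>0. 0 < h t \<and> h t \<le> 2"
    and "\<forall>t. 0 < t \<and> t \<le> 1/2 \<longrightarrow> h t = 1"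
    and "\<forall>t\<ge>1. h t = 1 / t"
  shows "liouville_on UNIV omega0 (Vhat h :: (real^'n) \<times> (real^'n) \<Rightarrow> (real^'n) \<times> (real^'n))
    \<and> (\<exists>V :: 'n wt \<Rightarrow> 'n wt.
          b3_vector_field V \<and> f_related h V
          \<and> liouville_on_subset (Wtilde - Ytilde) omega_b V
          \<and> (\<forall>V'. b3_vector_field V' \<and> f_related h V' \<longrightarrow> (\<forall>w\<in>Wtilde. V' w = V w)))"
proof (intro conjI exI[of _ "VV h"])
  note hs = assms(1) and h1 = assms(3) and h2 = assms(4)
  show "liouville_on UNIV omega0 (Vhat h :: (real^'n) \<times> (real^'n) \<Rightarrow> (real^'n) \<times> (real^'n))"
    by (rule Vhat_liouville[OF hs h1])
  have sm: "smooth_on UNIV (VV h :: 'n wt \<Rightarrow> _)" by (rule smooth_VV[OF hs h2])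
  show "b3_vector_field (VV h :: 'n wt \<Rightarrow> _)"
    unfolding b3_vector_field_def
  proof (intro conjI ballI exI[of _ "\<lambda>_. 0"])
    show "smooth_on_set (Wtilde :: 'n wt set) (VV h)" by (rule smooth_set_UNIV[OF sm])
    show "VV h w \<in> tangent_vectors Wtilde w" if "w \<in> Wtilde" for w :: "'n wt" using VV_tangent(1)[OF that] .
    show "smooth_on_set (Wtilde :: 'n wt set) (\<lambda>_::'n wt. 0::real)" by (rule smooth_set_UNIV[OF smooth_const]) simp
    show "fst (VV h w) = (fst w)^3 * 0" for w :: "'n wt" by (simp add: VV_def)
  qed
  show "f_related h (VV h :: 'n wt \<Rightarrow> _)" by (rule VV_f_related)
  show "liouville_on_subset (Wtilde - Ytilde) omega_b (VV h :: 'n wt \<Rightarrow> _)"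
    unfolding liouville_on_subset_def
  proof (intro conjI ballI)
    show "smooth_on_set (Wtilde - Ytilde :: 'n wt set) (VV h)" by (rule smooth_set_UNIV[OF sm])
    show "VV h x \<in> tangent_vectors (Wtilde - Ytilde) x" if "x \<in> Wtilde - Ytilde" for x :: "'n wt"
      using VV_tangent(2)[of x h] that by auto
    show "\<exists>U g. x \<in> U \<and> smooth_on U g \<and> (\<forall>y\<in>U \<inter> (Wtilde - Ytilde :: 'n wt set). g y = VV h y) \<and>
        (\<forall>u\<in>tangent_vectors (Wtilde - Ytilde :: 'n wt set) x. \<forall>w\<in>tangent_vectors (Wtilde - Ytilde :: 'n wt set) x. lie_deriv2 g omega_b x u w = omega_b x u w)"
      if "x \<in> Wtilde - Ytilde" for x :: "'n wt"
    proof (intro exI[of _ UNIV] exI[of _ "VV h"] conjI ballI)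
      have z: "fst x \<noteq> 0" using that by (auto simp: mem_Ytilde)
      show "lie_deriv2 (VV h) omega_b x u w = omega_b x u w" for u w by (rule lie_VV[OF hs h2 z])
    qed (use sm in auto)
  qed
  show "\<forall>V'. b3_vector_field V' \<and> f_related h V' \<longrightarrow> (\<forall>w\<in>(Wtilde :: 'n wt set). V' w = VV h w)"
    using uniq_on[OF h2] by blast
qed

end
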